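(* In the setting described in the context, let a stochastic Runge--Kutta method with stages $s$ and random coefficients $Z^{m,n}_{ij}$, $z^{m,n}_i$ be given, and use the same coefficients in the (local) SRK Lawson scheme and in the global SRK Lawson scheme. Then the two schemes produce the same sequence of approximations: $e^{\bar L^0_n}V^0_n=Y_n$ for all $n=0,1,\dots,N$.
   Context: Setting: $d,M\in\mathbb{N}$, $t_0<T$, grid $t_0<t_1<\dots<t_N=T$ with $h=(T-t_0)/N$, $t_n=t_0+nh$. $A_0,\dots,A_M\in\mathbb{R}^{d\times d}$ pairwise commute; $g_m:[t_0,T]\times\mathbb{R}^d\to\mathbb{R}^d$; $\gamma^\star=\tfrac12$ (Itô interpretation) or $\gamma^\star=0$ (Stratonovich interpretation). Set $\Lambda=A_0-\gamma^\star\sum_{m=1}^MA_m^2$, $\tilde g_0=g_0-2\gamma^\star\sum_{m=1}^MA_mg_m$, $\tilde g_m=g_m$ ($m\ge1$). For the SRK coefficients put $c^{n,i}_m=\sum_{j=1}^sZ^{m,n}_{ij}$, $c^n_m=\sum_{i=1}^sz^{m,n}_i$, and assume $c^n_0=h$. Stage equations are assumed uniquely solvable so that both schemes are well defined. Local SRK Lawson scheme: $Y_0=x_0$; for $n=0,\dots,N-1$, with $\Delta L^n_i=\Lambda c^{n,i}_0+\sum_{m=1}^MA_mc^{n,i}_m$ and $\Delta L^n=\Lambda c^n_0+\sum_{m=1}^MA_mc^n_m$, $H_i=Y_n+\sum_{j=1}^s\sum_{m=0}^MZ^{m,n}_{ij}e^{-\Delta L^n_j}\tilde g_m(t_n+c^{n,j}_0,e^{\Delta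 L^n_j}H_j)$, $V^n_{n+1}=Y_n+\sum_{i=1}^s\sum_{m=0}^Mz^{m,n}_ie^{-\Delta L^n_i}\tilde g_m(t_n+c^{n,i}_0,e^{\Delta L^n_i}H_i)$, $Y_{n+1}=e^{\Delta L^n}V^n_{n+1}$. Global SRK Lawson scheme: given $W^0\in\mathbb{R}^{M+1}$ with $W^0_0=t_0$ and $V^0_0=x_0$; for $n=0,\dots,N-1$, with $L^{0,n}_i=\Lambda(t_n+c^{n,i}_0-t_0)+\sum_{m=1}^MA_m(W^n_m+c^{n,i}_m-W^0_m)$, $H^0_i=V^0_n+\sum_{j=1}^s\sum_{m=0}^MZ^{m,n}_{ij}e^{-L^{0,n}_j}\tilde g_m(t_n+c^{n,j}_0,e^{L^{0,n}_j}H^0_j)$, $V^0_{n+1}=V^0_n+\sum_{i=1}^s\sum_{m=0}^Mz^{m,n}_ie^{-L^{0,n}_i}\tilde g_m(t_n+c^{n,i}_0,e^{L^{0,n}_i}H^0_i)$, $W^{n+1}_m=W^n_m+c^n_m$ ($m=0,\dots,M$); its output is $e^{\bar L^0_n}V^0_n$ with $\bar L^0_n=\Lambda(t_n-t_0)+\sum_{m=1}^MA_m(W^n_m-W^0_m)$. *)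

theory Defs
  imports "HOL-Analysis.Analysis"
begin

primrec matpow :: "real^'n^'n \<Rightarrow> nat \<Rightarrow> real^'n^'n" where
  "matpow A 0 = mat 1"
| "matpow A (Suc k) = A ** matpow A k"

definition mexp :: "real^'n^'n \<Rightarrow> real^'n^'n" where
  "mexp A = (\<Sum>k. (1 / fact k) *\<^sub>R matpow A k)"

text \<open>Index conventions: matrices/noises m = 0..M, stages i,j = 0..s-1
  (instead of 1..s), coefficient arrays Z m n i j and z m n i.\<close>

definition Lam :: "(nat \<Rightarrow> real^'d^'d) \<Rightarrow> real \<Rightarrow> nat \<Rightarrow> real^'d^'d" where
  "Lam A \<gamma> M = A 0 - \<gamma> *\<^sub>R (\<Sum>m\<in>{1..M}. A m ** A m)"

definition gtil :: "(nat \<Rightarrow> real^'d^'d) \<Rightarrow> (nat \<Rightarrow> real \<Rightarrow> real^'d \<Rightarrow> real^'d) \<Rightarrow> real \<Rightarrow> nat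
    \<Rightarrow> nat \<Rightarrow> real \<Rightarrow> real^'d \<Rightarrow> real^'d" where
  "gtil A g \<gamma> M m t x =
     (if m = 0 then g 0 t x - (2 * \<gamma>) *\<^sub>R (\<Sum>k\<in>{1..M}. A k *v g k t x) else g m t x)"

definition cst :: "(nat \<Rightarrow> nat \<Rightarrow> nat \<Rightarrow> nat \<Rightarrow> real) \<Rightarrow> nat \<Rightarrow> nat \<Rightarrow> nat \<Rightarrow> nat \<Rightarrow> real" where
  "cst Z s m n i = (\<Sum>j<s. Z m n i j)"

definition cfull :: "(nat \<Rightarrow> nat \<Rightarrow> nat \<Rightarrow> real) \<Rightarrow> nat \<Rightarrow> nat \<Rightarrow> nat \<Rightarrow> real" where
  "cfull z s m n = (\<Sum>i<s. z m n i)"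

definition rk_incr :: "nat \<Rightarrow> nat \<Rightarrow> (nat \<Rightarrow> nat \<Rightarrow> real) \<Rightarrow> (nat \<Rightarrow> real^'d^'d) \<Rightarrow> (nat \<Rightarrow> real)
    \<Rightarrow> (nat \<Rightarrow> real \<Rightarrow> real^'d \<Rightarrow> real^'d) \<Rightarrow> (nat \<Rightarrow> real^'d) \<Rightarrow> real^'d" where
  "rk_incr s M w L tau G H =
     (\<Sum>j<s. \<Sum>m\<le>M. w m j *\<^sub>R (mexp (- L j) *v G m (tau j) (mexp (L j) *v H j)))"

definition dLi :: "(nat \<Rightarrow> real^'d^'d) \<Rightarrow> real \<Rightarrow> nat \<Rightarrow> nat \<Rightarrow> (nat \<Rightarrow> nat \<Rightarrow> nat \<Rightarrow> nat \<Rightarrow> real)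
    \<Rightarrow> nat \<Rightarrow> nat \<Rightarrow> real^'d^'d" where
  "dLi A \<gamma> M s Z n i = cst Z s 0 n i *\<^sub>R Lam A \<gamma> M + (\<Sum>m\<in>{1..M}. cst Z s m n i *\<^sub>R A m)"

definition dL :: "(nat \<Rightarrow> real^'d^'d) \<Rightarrow> real \<Rightarrow> nat \<Rightarrow> nat \<Rightarrow> (nat \<Rightarrow> nat \<Rightarrow> nat \<Rightarrow> real)
    \<Rightarrow> nat \<Rightarrow> real^'d^'d" where
  "dL A \<gamma> M s z n = cfull z s 0 n *\<^sub>R Lam A \<gamma> M + (\<Sum>m\<in>{1..M}. cfull z s m n *\<^sub>R A m)"

definition Lgi :: "(nat \<Rightarrow> real^'d^'d) \<Rightarrow> real \<Rightarrow> nat \<Rightarrow> nat \<Rightarrow> (nat \<Rightarrow> nat \<Rightarrow> nat \<Rightarrow> nat \<Rightarrow> real)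
    \<Rightarrow> real \<Rightarrow> real \<Rightarrow> (nat \<Rightarrow> nat \<Rightarrow> real) \<Rightarrow> nat \<Rightarrow> nat \<Rightarrow> real^'d^'d" where
  "Lgi A \<gamma> M s Z t0 tn W n i =
     (tn + cst Z s 0 n i - t0) *\<^sub>R Lam A \<gamma> M
     + (\<Sum>m\<in>{1..M}. (W n m + cst Z s m n i - W 0 m) *\<^sub>R A m)"

definition Lbar :: "(nat \<Rightarrow> real^'d^'d) \<Rightarrow> real \<Rightarrow> nat \<Rightarrow> real \<Rightarrow> real \<Rightarrow> (nat \<Rightarrow> nat \<Rightarrow> real)
    \<Rightarrow> nat \<Rightarrow> real^'d^'d" where
  "Lbar A \<gamma> M t0 tn W n =
     (tn - t0) *\<^sub>R Lam A \<gamma> M + (\<Sum>m\<in>{1..M}. (W n m - W 0 m) *\<^sub>R A m)"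

definition grid :: "real \<Rightarrow> real \<Rightarrow> nat \<Rightarrow> nat \<Rightarrow> real" where
  "grid t0 T N n = t0 + real n * ((T - t0) / real N)"

definition loc_stages where
  "loc_stages A g \<gamma> M s Z t0 T N n y H \<longleftrightarrow>
     (\<forall>i<s. H i = y + rk_incr s M (\<lambda>m j. Z m n i j) (dLi A \<gamma> M s Z n)
                     (\<lambda>j. grid t0 T N n + cst Z s 0 n j) (gtil A g \<gamma> M) H)"

definition glob_stages where
  "glob_stages A g \<gamma> M s Z t0 T N W n v H \<longleftrightarrow>
     (\<forall>i<s. H i = v + rk_incr s M (\<lambda>m j. Z m n i j) (Lgi A \<gamma> M s Z t0 (grid t0 T N n) W n)
                     (\<lambda>j. grid t0 T N n + cst Z s 0 n j) (gtil A g \<gamma> M) H)"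

end

theory Submission imports Defs begin

typedef (overloaded) 'n endo = "UNIV :: ((real^'n) \<Rightarrow>\<^sub>L (real^'n)) set"
  morphisms rep_endo abs_endo by simp

setup_lifting type_definition_endo

instantiation endo :: (finite) real_normed_vector
begin
lift_definition norm_endo :: "'a endo \<Rightarrow> real" is norm .
lift_definition minus_endo :: "'a endo \<Rightarrow> 'a endo \<Rightarrow> 'a endo" is "(-)" .
lift_definition plus_endo :: "'a endo \<Rightarrow> 'a endo \<Rightarrow> 'a endo" is "(+)" .
lift_definition uminus_endo :: "'a endo \<Rightarrow> 'a endo" is "uminus" .
lift_definition zero_endo :: "'a endo" is "0" .
lift_definition scaleR_endo :: "real \<Rightarrow> 'a endo \<Rightarrow> 'a endo" is "scaleR" .
definition dist_endo :: "'a endo \<Rightarrow> 'a endo \<Rightarrow> real"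
  where "dist_endo a b = norm (a - b)"
definition uniformity_endo :: "('a endo \<times> 'a endo) filter"
  where "uniformity_endo = (INF e\<in>{0 <..}. principal {(x, y). dist x y < e})"
definition open_endo :: "'a endo set \<Rightarrow> bool"
  where "open_endo S = (\<forall>x\<in>S. \<forall>\<^sub>F (x', y) in uniformity. x' = x \<longrightarrow> y \<in> S)"
definition sgn_endo :: "'a endo \<Rightarrow> 'a endo"
  where "sgn_endo x = scaleR (inverse (norm x)) x"
instance
  apply standard
  unfolding dist_endo_def open_endo_def sgn_endo_def uniformity_endo_def
  apply (rule refl | (transfer, force simp: norm_triangle_ineq algebra_simps))+
  done
end

instantiation endo :: (finite) real_normed_algebra_1
begin
lift_definition times_endo :: "'a endo \<Rightarrow> 'a endo \<Rightarrow> 'a endo" is "(o\<^sub>L)" .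
lift_definition one_endo :: "'a endo" is "id_blinfun" .
instance
  apply standard
  apply (transfer, rule blinfun_eqI, simp add: blinfun.bilinear_simps)
  apply (transfer, rule blinfun_eqI, simp add: blinfun.bilinear_simps)
  apply (transfer, rule blinfun_eqI, simp add: blinfun.bilinear_simps)
  apply (transfer, rule blinfun_eqI, simp add: blinfun.bilinear_simps)
  apply (transfer, rule blinfun_eqI, simp add: blinfun.bilinear_simps)
  apply (transfer, rule blinfun_eqI, simp add: blinfun.bilinear_simps)
  apply (transfer, rule blinfun_eqI, simp add: blinfun.bilinear_simps)
  subgoal proof -
    have "norm (1::'a endo) = 1" by transfer simp
    then show ?thesis by (metis norm_zero zero_neq_one)
  qed
  apply (transfer, rule norm_blinfun_compose)
  apply (transfer, simp)
  done
end

lemma dist_endo_rep: "dist x y = dist (rep_endo x) (rep_endo y)"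
  unfolding dist_endo_def dist_norm by transfer simp

instance endo :: (finite) banach
proof
  fix X :: "nat \<Rightarrow> 'a endo"
  assume "Cauchy X"
  then have "Cauchy (\<lambda>n. rep_endo (X n))"
    unfolding Cauchy_def dist_endo_rep by simp
  then obtain L where "(\<lambda>n. rep_endo (X n)) \<longlonglongrightarrow> L"
    using convergent_def Cauchy_convergent_iff by blast
  then have "X \<longlonglongrightarrow> abs_endo L"
    unfolding tendsto_iff dist_endo_rep by (simp add: abs_endo_inverse)
  then show "convergent X" by (auto simp: convergent_def)
qed

lemma bl_mv: "bounded_linear (\<lambda>x. (M::real^'n^'n) *v x)"
  using linear_conv_bounded_linear matrix_vector_mul_linear by blast

definition emb :: "real^'n^'n \<Rightarrow> 'n endo" where
  "emb M = abs_endo (Blinfun (\<lambda>x. M *v x))"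

definition proj :: "'n endo \<Rightarrow> real^'n^'n" where
  "proj x = matrix (blinfun_apply (rep_endo x))"

lemma rep_emb: "blinfun_apply (rep_endo (emb M)) = (\<lambda>x. M *v x)"
  unfolding emb_def by (simp add: abs_endo_inverse bounded_linear_Blinfun_apply bl_mv)

lemma endo_eqI: "(\<And>v. blinfun_apply (rep_endo x) v = blinfun_apply (rep_endo y) v) \<Longrightarrow> x = y"
  by (metis blinfun_eqI rep_endo_inject)

lemma emb_mult: "emb (M ** N) = emb M * emb N"
  by (rule endo_eqI) (simp add: times_endo.rep_eq rep_emb matrix_vector_mul_assoc)

lemma emb_one: "emb (mat 1) = 1"
  by (rule endo_eqI) (simp add: one_endo.rep_eq rep_emb)

lemma emb_add: "emb (M + N) = emb M + emb N"
  by (rule endo_eqI) (simp add: plus_endo.rep_eq rep_emb matrix_vector_mult_add_rdistrib blinfun.bilinear_simps)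

lemma emb_scaleR: "emb (c *\<^sub>R M) = c *\<^sub>R emb M"
  by (rule endo_eqI) (simp add: scaleR_endo.rep_eq rep_emb scaleR_matrix_vector_assoc blinfun.bilinear_simps)

lemma proj_emb[simp]: "proj (emb M) = M"
  unfolding proj_def rep_emb by simp

lemma emb_inj: "emb M = emb N \<Longrightarrow> M = N"
  by (metis proj_emb)

lemma emb_pow: "emb (matpow A k) = emb A ^ k"
  by (induct k) (simp_all add: emb_one emb_mult)

lemma bl_proj: "bounded_linear (proj :: 'n endo \<Rightarrow> real^'n^'n)"
proof (rule bounded_linear_intro)
  fix x y :: "'n endo" and r :: real
  show "proj (x + y) = proj x + proj y"
    unfolding proj_def matrix_def by (simp add: vec_eq_iff plus_endo.rep_eq blinfun.bilinear_simps)
  show "proj (r *\<^sub>R x) = r *\<^sub>R proj x"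
    unfolding proj_def matrix_def by (simp add: vec_eq_iff scaleR_endo.rep_eq blinfun.bilinear_simps)
  have "norm (proj x) \<le> (\<Sum>i\<in>(UNIV::'n set). \<Sum>j\<in>(UNIV::'n set). norm x)"
  proof -
    have "norm (proj x) \<le> (\<Sum>i\<in>UNIV. norm (proj x $ i))" unfolding norm_vec_def[of "proj x"]
      by (rule L2_set_le_sum) simp
    also have "\<dots> \<le> (\<Sum>i\<in>(UNIV::'n set). \<Sum>j\<in>(UNIV::'n set). norm x)"
    proof (rule sum_mono)
      fix i
      have "norm (proj x $ i) \<le> (\<Sum>j\<in>UNIV. \<bar>proj x $ i $ j\<bar>)" by (rule norm_le_l1_cart)
      also have "\<dots> \<le> (\<Sum>j\<in>(UNIV::'n set). norm x)"
      proof (rule sum_mono)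
        fix j
        have "\<bar>proj x $ i $ j\<bar> = \<bar>blinfun_apply (rep_endo x) (axis j 1) $ i\<bar>"
          unfolding proj_def matrix_def by simp
        also have "\<dots> \<le> norm (blinfun_apply (rep_endo x) (axis j 1))" by (rule component_le_norm_cart)
        also have "\<dots> \<le> norm (rep_endo x) * norm (axis j (1::real))" by (rule norm_blinfun)
        also have "\<dots> = norm x" by (simp add: norm_endo.rep_eq)
        finally show "\<bar>proj x $ i $ j\<bar> \<le> norm x" .
      qed
      finally show "norm (proj x $ i) \<le> (\<Sum>j\<in>(UNIV::'n set). norm x)" by simp
    qed
    finally show ?thesis .
  qed
  then show "norm (proj x) \<le> norm x * (real CARD('n) * real CARD('n))"
    by (simp add: algebra_simps)
qed

lemma bl_emb: "bounded_linear (emb :: real^'n^'n \<Rightarrow> 'n endo)"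
  unfolding linear_conv_bounded_linear[symmetric]
  by (rule linearI) (simp_all add: emb_add emb_scaleR)

lemma mexp_sums: "(\<lambda>k. (1 / fact k) *\<^sub>R matpow A k) sums proj (exp (emb A))"
proof -
  have "(\<lambda>k. emb A ^ k /\<^sub>R fact k) sums exp (emb A)" by (rule exp_converges)
  from bounded_linear.sums[OF bl_proj this]
  have "(\<lambda>k. proj (emb A ^ k /\<^sub>R fact k)) sums proj (exp (emb A))" .
  moreover have "proj (emb A ^ k /\<^sub>R fact k) = (1 / fact k) *\<^sub>R matpow A k" for k
    by (simp add: emb_pow[symmetric] emb_scaleR[symmetric] divide_inverse)
  ultimately show ?thesis by simp
qed

lemma mexp_eq: "mexp A = proj (exp (emb A))"
  unfolding mexp_def using mexp_sums sums_unique by metis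

lemma emb_mexp: "emb (mexp A) = exp (emb A)"
proof -
  from bounded_linear.sums[OF bl_emb mexp_sums[of A]]
  have "(\<lambda>k. emb ((1 / fact k) *\<^sub>R matpow A k)) sums emb (mexp A)" by (simp add: mexp_eq)
  moreover have "emb ((1 / fact k) *\<^sub>R matpow A k) = emb A ^ k /\<^sub>R fact k" for k
    by (simp add: emb_pow emb_scaleR divide_inverse)
  ultimately have "(\<lambda>k. emb A ^ k /\<^sub>R fact k) sums emb (mexp A)" by simp
  then show ?thesis using exp_converges sums_unique2 by blast
qed

lemma mexp_add: "X ** Y = Y ** X \<Longrightarrow> mexp (X + Y) = mexp X ** mexp Y"
proof (rule emb_inj)
  assume c: "X ** Y = Y ** X"
  have "emb X * emb Y = emb Y * emb X" using c by (simp flip: emb_mult)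
  then show "emb (mexp (X + Y)) = emb (mexp X ** mexp Y)"
    by (simp add: emb_mexp emb_mult emb_add exp_add_commuting)
qed

lemma mexp_zero: "mexp 0 = mat 1"
proof -
  have "emb (0::real^'n^'n) = 0" using emb_scaleR[of 0] by simp
  then show ?thesis by (intro emb_inj) (simp add: emb_mexp emb_one \<open>emb 0 = 0\<close>)
qed



lemma lin_emb: "linear (emb :: real^'n^'n \<Rightarrow> 'n endo)"
  using bl_emb bounded_linear.linear by blast

lemma emb_sum: "emb (sum f S) = (\<Sum>i\<in>S. emb (f i))"
  using linear_sum[OF lin_emb] by (simp add: o_def)

lemma emb_uminus: "emb (- X) = - emb X"
  using emb_scaleR[of "-1" X] by simp

lemma emb_diff: "emb (X - Y) = emb X - emb Y"
  using emb_add[of X "- Y"] by (simp add: emb_uminus)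

lemma mcomm_iff: "X ** Y = Y ** X \<longleftrightarrow> emb X * emb Y = emb Y * emb X"
  by (metis emb_inj emb_mult)

lemma ecomm_sum: "(\<And>i. i \<in> S \<Longrightarrow> x * f i = f i * x) \<Longrightarrow> (x::'a::ring) * sum f S = sum f S * x"
  by (simp add: sum_distrib_left sum_distrib_right)

lemma mexp_neg_add:
  assumes "X ** Y = Y ** X"
  shows "mexp X ** mexp (- (X + Y)) = mexp (- Y)"
proof -
  have "X ** (- (X + Y)) = (- (X + Y)) ** X"
    using assms by (simp add: mcomm_iff emb_uminus emb_add emb_diff algebra_simps)
  then have "mexp (X + - (X + Y)) = mexp X ** mexp (- (X + Y))" by (rule mexp_add)
  then have "mexp X ** mexp (- (X + Y)) = mexp (X + - (X + Y))" by (rule sym)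
  also have "X + - (X + Y) = - Y" by simp
  finally show ?thesis .
qed

lemma rk_shift:
  assumes "\<And>j. j < s \<Longrightarrow> E ** D j = D j ** E"
  shows "mexp E *v rk_incr s M w (\<lambda>j. E + D j) tau G H
       = rk_incr s M w D tau G (\<lambda>j. mexp E *v H j)"
proof -
  have lin: "linear (\<lambda>x. mexp E *v x)" by simp
  have tm: "mexp E *v (w m j *\<^sub>R (mexp (- (E + D j)) *v G m (tau j) (mexp (E + D j) *v H j)))
      = w m j *\<^sub>R (mexp (- D j) *v G m (tau j) (mexp (D j) *v (mexp E *v H j)))" if "j < s" for m j
  proof -
    have c: "E ** D j = D j ** E" using assms that by simp
    have "mexp (E + D j) = mexp (D j) ** mexp E"
      using c by (metis add.commute mexp_add)
    moreover have "mexp E ** mexp (- (E + D j)) = mexp (- D j)" using mexp_neg_add[OF c] .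
    ultimately show ?thesis
      by (simp only: matrix_vector_mult_scaleR matrix_vector_mul_assoc)
  qed
  show ?thesis
    unfolding rk_incr_def linear_sum[OF lin, unfolded o_def]
    by (intro sum.cong refl tm) simp
qed


lemma comm_comb_gen:
  fixes x :: "'a::real_algebra_1" and e :: "nat \<Rightarrow> 'a"
  assumes c: "\<And>k. k \<le> M \<Longrightarrow> x * e k = e k * x"
  shows "x * (a *\<^sub>R (e 0 - g *\<^sub>R (\<Sum>m\<in>{1..M}. e m * e m)) + (\<Sum>m\<in>{1..M}. b m *\<^sub>R e m))
       = (a *\<^sub>R (e 0 - g *\<^sub>R (\<Sum>m\<in>{1..M}. e m * e m)) + (\<Sum>m\<in>{1..M}. b m *\<^sub>R e m)) * x"
proof -
  have 1: "x * (\<Sum>m\<in>{1..M}. e m * e m) = (\<Sum>m\<in>{1..M}. e m * e m) * x"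
  proof (rule ecomm_sum)
    fix m assume "m \<in> {1..M}"
    then have "x * e m = e m * x" using c by simp
    then show "x * (e m * e m) = e m * e m * x" by (metis mult.assoc)
  qed
  have 2: "x * (\<Sum>m\<in>{1..M}. b m *\<^sub>R e m) = (\<Sum>m\<in>{1..M}. b m *\<^sub>R e m) * x"
    by (rule ecomm_sum) (use c in simp)
  have 3: "x * e 0 = e 0 * x" using c by simp
  show ?thesis using 1 2 3 by (simp add: algebra_simps)
qed

definition comb :: "(nat \<Rightarrow> real^'d^'d) \<Rightarrow> real \<Rightarrow> nat \<Rightarrow> real \<Rightarrow> (nat \<Rightarrow> real) \<Rightarrow> real^'d^'d" where
  "comb A g M a b = a *\<^sub>R Lam A g M + (\<Sum>m\<in>{1..M}. b m *\<^sub>R A m)"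

lemma emb_comb: "emb (comb A g M a b) = a *\<^sub>R (emb (A 0) - g *\<^sub>R (\<Sum>m\<in>{1..M}. emb (A m) * emb (A m)))
   + (\<Sum>m\<in>{1..M}. b m *\<^sub>R emb (A m))"
  unfolding comb_def Lam_def by (simp add: emb_add emb_scaleR emb_diff emb_sum emb_mult)

lemma comb_comm:
  assumes comm: "\<forall>m\<le>M. \<forall>k\<le>M. A m ** A k = A k ** A m"
  shows "comb A g M a b ** comb A g M a' b' = comb A g M a' b' ** comb A g M a b"
proof -
  let ?e = "\<lambda>k. emb (A k)"
  have ce: "?e m * ?e k = ?e k * ?e m" if "m \<le> M" "k \<le> M" for m k
    using comm that by (simp add: mcomm_iff)
  have s1: "?e k * emb (comb A g M a b) = emb (comb A g M a b) * ?e k" if "k \<le> M" for k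
    unfolding emb_comb by (rule comm_comb_gen) (use ce that in auto)
  show ?thesis unfolding mcomm_iff
    unfolding emb_comb[of A g M a' b']
    by (rule comm_comb_gen) (use s1 in \<open>auto simp: emb_comb\<close>)
qed

lemma dLi_comb: "dLi A g M s Z n i = comb A g M (cst Z s 0 n i) (\<lambda>m. cst Z s m n i)"
  unfolding dLi_def comb_def ..
lemma dL_comb: "dL A g M s z n = comb A g M (cfull z s 0 n) (\<lambda>m. cfull z s m n)"
  unfolding dL_def comb_def ..
lemma Lbar_comb: "Lbar A g M t0 tn W n = comb A g M (tn - t0) (\<lambda>m. W n m - W 0 m)"
  unfolding Lbar_def comb_def ..
lemma Lgi_split: "Lgi A g M s Z t0 tn W n i = Lbar A g M t0 tn W n + dLi A g M s Z n i"
proof -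
  have "(\<Sum>m\<in>{1..M}. (W n m + cst Z s m n i - W 0 m) *\<^sub>R A m)
     = (\<Sum>m\<in>{1..M}. (W n m - W 0 m) *\<^sub>R A m + cst Z s m n i *\<^sub>R A m)"
    by (intro sum.cong refl) (simp add: algebra_simps)
  also have "\<dots> = (\<Sum>m\<in>{1..M}. (W n m - W 0 m) *\<^sub>R A m) + (\<Sum>m\<in>{1..M}. cst Z s m n i *\<^sub>R A m)"
    by (rule sum.distrib)
  finally show ?thesis unfolding Lgi_def Lbar_def dLi_def
    by (simp add: algebra_simps)
qed

lemma rk_cong: "(\<And>j. j < s \<Longrightarrow> H j = H' j) \<Longrightarrow> rk_incr s M w L tau G H = rk_incr s M w L tau G H'"
  unfolding rk_incr_def by (intro sum.cong refl) auto

theorem lemma4: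
  fixes A :: "nat \<Rightarrow> real^'d^'d"
    and g :: "nat \<Rightarrow> real \<Rightarrow> real^'d \<Rightarrow> real^'d"
    and \<gamma> t0 T :: real and M N s :: nat
    and Z :: "nat \<Rightarrow> nat \<Rightarrow> nat \<Rightarrow> nat \<Rightarrow> real"
    and z :: "nat \<Rightarrow> nat \<Rightarrow> nat \<Rightarrow> real"
    and x0 :: "real^'d"
    and Y :: "nat \<Rightarrow> real^'d" and HL :: "nat \<Rightarrow> nat \<Rightarrow> real^'d"
    and V :: "nat \<Rightarrow> real^'d" and HG :: "nat \<Rightarrow> nat \<Rightarrow> real^'d"
    and W :: "nat \<Rightarrow> nat \<Rightarrow> real"
  assumes "t0 < T" and "0 < N"
    and comm: "\<forall>m\<le>M. \<forall>k\<le>M. A m ** A k = A k ** A m"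
    and gam: "\<gamma> = 1/2 \<or> \<gamma> = 0"
    and c0: "\<forall>n<N. cfull z s 0 n = (T - t0) / real N"
    \<comment> \<open>local SRK Lawson scheme\<close>
    and Y0: "Y 0 = x0"
    and HL_st: "\<forall>n<N. loc_stages A g \<gamma> M s Z t0 T N n (Y n) (HL n)"
    and HL_uniq: "\<forall>n<N. \<forall>H. loc_stages A g \<gamma> M s Z t0 T N n (Y n) H \<longrightarrow> (\<forall>i<s. H i = HL n i)"
    and Y_step: "\<forall>n<N. Y (Suc n) = mexp (dL A \<gamma> M s z n) *v
        (Y n + rk_incr s M (\<lambda>m i. z m n i) (dLi A \<gamma> M s Z n)
                 (\<lambda>i. grid t0 T N n + cst Z s 0 n i) (gtil A g \<gamma> M) (HL n))"
    \<comment> \<open>global SRK Lawson scheme\<close>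
    and W00: "W 0 0 = t0"
    and W_step: "\<forall>n<N. \<forall>m\<le>M. W (Suc n) m = W n m + cfull z s m n"
    and V0: "V 0 = x0"
    and HG_st: "\<forall>n<N. glob_stages A g \<gamma> M s Z t0 T N W n (V n) (HG n)"
    and HG_uniq: "\<forall>n<N. \<forall>H. glob_stages A g \<gamma> M s Z t0 T N W n (V n) H \<longrightarrow> (\<forall>i<s. H i = HG n i)"
    and V_step: "\<forall>n<N. V (Suc n) = V n + rk_incr s M (\<lambda>m i. z m n i) (Lgi A \<gamma> M s Z t0 (grid t0 T N n) W n)
                 (\<lambda>i. grid t0 T N n + cst Z s 0 n i) (gtil A g \<gamma> M) (HG n)"
  shows "\<forall>n\<le>N. mexp (Lbar A \<gamma> M t0 (grid t0 T N n) W n) *v V n = Y n"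
proof -
  define Eb where "Eb n = Lbar A \<gamma> M t0 (grid t0 T N n) W n" for n
  have cm: "\<And>a b a' b'. comb A \<gamma> M a b ** comb A \<gamma> M a' b' = comb A \<gamma> M a' b' ** comb A \<gamma> M a b"
    using comb_comm[OF comm] by blast
  have step: "mexp (Eb (Suc n)) *v V (Suc n) = Y (Suc n)"
    if n: "n < N" and IH: "mexp (Eb n) *v V n = Y n" for n
  proof -
    let ?tau = "\<lambda>i. grid t0 T N n + cst Z s 0 n i"
    define H' where "H' i = mexp (Eb n) *v HG n i" for i
    have Lgi_eq: "Lgi A \<gamma> M s Z t0 (grid t0 T N n) W n = (\<lambda>j. Eb n + dLi A \<gamma> M s Z n j)"
      by (rule ext) (simp add: Lgi_split Eb_def)
    have cEb: "Eb n ** dLi A \<gamma> M s Z n j = dLi A \<gamma> M s Z n j ** Eb n" for j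
      unfolding Eb_def Lbar_comb dLi_comb by (rule cm)
    have shift: "mexp (Eb n) *v rk_incr s M w (Lgi A \<gamma> M s Z t0 (grid t0 T N n) W n) ?tau (gtil A g \<gamma> M) HH
        = rk_incr s M w (dLi A \<gamma> M s Z n) ?tau (gtil A g \<gamma> M) (\<lambda>j. mexp (Eb n) *v HH j)" for w HH
      unfolding Lgi_eq by (rule rk_shift) (rule cEb)
    have "loc_stages A g \<gamma> M s Z t0 T N n (Y n) H'"
      unfolding loc_stages_def
    proof (intro allI impI)
      fix i assume "i < s"
      with HG_st n have "HG n i = V n + rk_incr s M (\<lambda>m j. Z m n i j) (Lgi A \<gamma> M s Z t0 (grid t0 T N n) W n)
                     ?tau (gtil A g \<gamma> M) (HG n)"
        unfolding glob_stages_def by blast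
      then have "H' i = mexp (Eb n) *v V n + mexp (Eb n) *v rk_incr s M (\<lambda>m j. Z m n i j) (Lgi A \<gamma> M s Z t0 (grid t0 T N n) W n)
                     ?tau (gtil A g \<gamma> M) (HG n)"
        unfolding H'_def by (simp add: matrix_vector_right_distrib)
      also have "\<dots> = Y n + rk_incr s M (\<lambda>m j. Z m n i j) (dLi A \<gamma> M s Z n) ?tau (gtil A g \<gamma> M) H'"
        unfolding shift IH H'_def ..
      finally show "H' i = Y n + rk_incr s M (\<lambda>m j. Z m n i j) (dLi A \<gamma> M s Z n) ?tau (gtil A g \<gamma> M) H'" .
    qed
    with HL_uniq n have HLe: "\<And>i. i < s \<Longrightarrow> H' i = HL n i" by blast
    have EbS: "Eb (Suc n) = dL A \<gamma> M s z n + Eb n"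
    proof -
      have g: "grid t0 T N (Suc n) - t0 = cfull z s 0 n + (grid t0 T N n - t0)"
        using c0 n assms(2) unfolding grid_def by (simp add: field_simps)
      have w: "W (Suc n) m - W 0 m = cfull z s m n + (W n m - W 0 m)" if "m \<in> {1..M}" for m
        using W_step n that by simp
      have "(\<Sum>m\<in>{1..M}. (W (Suc n) m - W 0 m) *\<^sub>R A m)
         = (\<Sum>m\<in>{1..M}. cfull z s m n *\<^sub>R A m + (W n m - W 0 m) *\<^sub>R A m)"
        by (intro sum.cong refl) (simp add: w scaleR_add_left)
      also have "\<dots> = (\<Sum>m\<in>{1..M}. cfull z s m n *\<^sub>R A m) + (\<Sum>m\<in>{1..M}. (W n m - W 0 m) *\<^sub>R A m)"
        by (rule sum.distrib)
      finally have ws: "(\<Sum>m\<in>{1..M}. (W (Suc n) m - W 0 m) *\<^sub>R A m) = \<dots>" .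
      show ?thesis
        unfolding Eb_def Lbar_def dL_def g ws
        by (simp add: scaleR_add_left algebra_simps)
    qed
    have cdL: "dL A \<gamma> M s z n ** Eb n = Eb n ** dL A \<gamma> M s z n"
      unfolding Eb_def Lbar_comb dL_comb by (rule cm)
    have "Y (Suc n) = mexp (dL A \<gamma> M s z n) *v
        (Y n + rk_incr s M (\<lambda>m i. z m n i) (dLi A \<gamma> M s Z n) ?tau (gtil A g \<gamma> M) (HL n))"
      using Y_step n by blast
    also have "rk_incr s M (\<lambda>m i. z m n i) (dLi A \<gamma> M s Z n) ?tau (gtil A g \<gamma> M) (HL n)
        = rk_incr s M (\<lambda>m i. z m n i) (dLi A \<gamma> M s Z n) ?tau (gtil A g \<gamma> M) H'"
      by (rule rk_cong) (simp add: HLe)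
    also have "\<dots> = mexp (Eb n) *v rk_incr s M (\<lambda>m i. z m n i) (Lgi A \<gamma> M s Z t0 (grid t0 T N n) W n) ?tau (gtil A g \<gamma> M) (HG n)"
      unfolding shift H'_def ..
    also have "Y n + \<dots> = mexp (Eb n) *v V (Suc n)"
      using V_step n IH by (simp add: matrix_vector_right_distrib)
    also have "mexp (dL A \<gamma> M s z n) *v (mexp (Eb n) *v V (Suc n)) = mexp (Eb (Suc n)) *v V (Suc n)"
      unfolding EbS mexp_add[OF cdL] matrix_vector_mul_assoc ..
    finally show ?thesis by simp
  qed
  have base: "mexp (Eb 0) *v V 0 = Y 0"
  proof -
    have "Eb 0 = 0" unfolding Eb_def Lbar_def grid_def by simp
    then show ?thesis using V0 Y0 by (simp add: mexp_zero)
  qed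
  have "\<forall>n. n \<le> N \<longrightarrow> mexp (Eb n) *v V n = Y n"
  proof (intro allI)
    fix n show "n \<le> N \<longrightarrow> mexp (Eb n) *v V n = Y n"
      by (induct n) (use base step in auto)
  qed
  then show ?thesis unfolding Eb_def by blast
qed

end
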